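(* Let $B>0$, let $\mathscr{F}:[0,\infty)\to[0,1]$ be a survival function (nonincreasing, $\mathscr{F}(0)=1$), and let $A:[0,\infty)\to[0,\infty)$ be an infectivity function, such that \[ R:=f(0)\;=\;B\int_0^\infty\!\!\int_0^\infty \mathscr{F}(a+\tau)\,A(\tau)\,d\tau\,da \] is finite and satisfies $f(0)>1$. For $\theta\in(0,1]$ and $p>0$ let $F(\theta,p)$ denote the unique positive solution $x$ of \[ 1=\frac{B}{1+p-\theta}\int_0^\infty\!\!\int_0^\infty\Big(p\theta e^{-\theta a x}+(1+p)(1-\theta)e^{-(1+p)a x}\Big)\mathscr{F}(a+\tau)A(\tau)\,d\tau\,da, \] and let $F^*$ denote the unique positive solution $x$ of $1=B\int_0^\infty\int_0^\infty e^{-a x}\mathscr{F}(a+\tau)A(\tau)\,d\tau\,da$. Assume that for each $\theta\in(0,1]$ the limit $F(\theta,+\infty):=\lim_{p\to\infty}F(\theta,p)$ exists. Then \[ F(\theta,+\infty)=0 \ \text{ if } 0<\theta\le \tfrac{1}{f(0)}, \qquad F(\theta,+\infty)\neq 0 \ \text{ if } \tfrac{1}{f(0)}<\theta<1, \qquad F(1,+\infty)=F^*. \] Moreover, on the interval $\left(\frac{1}{f(0)},1\right)$ the function $\theta\mapsto F(\theta,+\infty)$ is increasing and satisfies $0<F(\theta,+\infty)<F^*$.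
   Context: This is an age-structured SIR-type epidemic model with vaccination: $B$ is a constant birth rate, $\mathscr{F}(a)$ is the probability of surviving to age $a$, $A(\tau)$ is the expected contribution to the force of infection of an individual infected $\tau$ time units ago, $\theta\in[0,1]$ is the vaccine parameter (vaccinated susceptibles are infected at rate $\theta$ times the force of infection), and the vaccination rate is $p$ times the force of infection. $F(\theta,p)$ is the endemic (steady-state) force of infection and $F^*$ is the endemic force of infection without vaccination; $f(0)$ is the basic reproduction number. *)

theory Defs
  imports "HOL-Analysis.Analysis"
begin

definition dbl :: "(real \<Rightarrow> real) \<Rightarrow> (real \<Rightarrow> real) \<Rightarrow> (real \<Rightarrow> real) \<Rightarrow> real" where
  "dbl Fs A w = (LBINT a:{0..}. (LBINT \<tau>:{0..}. w a * Fs (a + \<tau>) * A \<tau>))"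

definition f0 :: "real \<Rightarrow> (real \<Rightarrow> real) \<Rightarrow> (real \<Rightarrow> real) \<Rightarrow> real" where
  "f0 B Fs A = B * dbl Fs A (\<lambda>_. 1)"

definition Fvac :: "real \<Rightarrow> (real \<Rightarrow> real) \<Rightarrow> (real \<Rightarrow> real) \<Rightarrow> real \<Rightarrow> real \<Rightarrow> real" where
  "Fvac B Fs A \<theta> p = (THE x. x > 0 \<and>
     1 = B / (1 + p - \<theta>) * dbl Fs A (\<lambda>a. p * \<theta> * exp (- \<theta> * a * x)
              + (1 + p) * (1 - \<theta>) * exp (- (1 + p) * a * x)))"

definition Fstar :: "real \<Rightarrow> (real \<Rightarrow> real) \<Rightarrow> (real \<Rightarrow> real) \<Rightarrow> real" where
  "Fstar B Fs A = (THE x. x > 0 \<and> 1 = B * dbl Fs A (\<lambda>a. exp (- a * x)))"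

end

theory Submission
  imports Defs
begin


lemma lim_aux: "((\<lambda>p::real. c / (p + d)) \<longlongrightarrow> 0) at_top"
proof -
  have "filterlim (\<lambda>p::real. d + p) at_top at_top"
    by (rule filterlim_tendsto_add_at_top[OF tendsto_const filterlim_ident])
  then have "filterlim (\<lambda>p::real. p + d) at_top at_top" by (simp add: add.commute)
  then show ?thesis
    by (intro tendsto_divide_0[OF tendsto_const] filterlim_at_top_imp_at_infinity)
qed
lemma c1_lim: fixes \<theta> :: real assumes "0 < \<theta>" "\<theta> \<le> 1" shows "((\<lambda>p::real. p*\<theta>/(1+p-\<theta>)) \<longlongrightarrow> \<theta>) at_top"
proof -
  have "((\<lambda>p::real. \<theta> - \<theta>*(1-\<theta>)/(p + (1-\<theta>))) \<longlongrightarrow> \<theta> - 0) at_top"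
    by (rule tendsto_diff[OF tendsto_const lim_aux])
  moreover have "\<forall>\<^sub>F p in at_top. \<theta> - \<theta>*(1-\<theta>)/(p + (1-\<theta>)) = p*\<theta>/(1+p-\<theta>)"
    using eventually_gt_at_top[of 0]
    by eventually_elim (use assms in \<open>auto simp: field_simps\<close>)
  ultimately show ?thesis by (simp add: tendsto_cong)
qed
lemma c2_lim: fixes \<theta> :: real assumes "0 < \<theta>" "\<theta> \<le> 1" shows "((\<lambda>p::real. (1+p)*(1-\<theta>)/(1+p-\<theta>)) \<longlongrightarrow> 1-\<theta>) at_top"
proof -
  have "((\<lambda>p::real. (1-\<theta>) + \<theta>*(1-\<theta>)/(p + (1-\<theta>))) \<longlongrightarrow> (1-\<theta>) + 0) at_top"
    by (rule tendsto_add[OF tendsto_const lim_aux])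
  moreover have "\<forall>\<^sub>F p in at_top. (1-\<theta>) + \<theta>*(1-\<theta>)/(p + (1-\<theta>)) = (1+p)*(1-\<theta>)/(1+p-\<theta>)"
    using eventually_gt_at_top[of 0]
    by eventually_elim (use assms in \<open>auto simp: field_simps\<close>)
  ultimately show ?thesis by (simp add: tendsto_cong)
qed
lemma lin_top: "0 < c \<Longrightarrow> filterlim (\<lambda>x::real. c * x) at_top at_top"
  by (rule filterlim_tendsto_pos_mult_at_top[OF tendsto_const _ filterlim_ident])

locale kfun =
  fixes k :: "real \<Rightarrow> real"
  assumes k_meas[measurable]: "k \<in> borel_measurable borel"
  and k_nonneg: "\<And>a. 0 \<le> k a"
  and k_neg: "\<And>a. a < 0 \<Longrightarrow> k a = 0"
  and k_int: "integrable lborel k"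
  and k_pos: "integral\<^sup>L lborel k > 0"
  and k_anti: "\<And>a b. 0 < a \<Longrightarrow> a \<le> b \<Longrightarrow> k b \<le> k a"
begin

definition phi where "phi y = integral\<^sup>L lborel (\<lambda>a. exp (-(a*y)) * k a)"

lemma bound_k: "0 \<le> y \<Longrightarrow> norm (exp (-(a*y)) * k a) \<le> norm (k a)"
proof (cases "a < 0")
  case True then show ?thesis by (simp add: k_neg)
next
  case False
  assume "0 \<le> y"
  then have "exp (-(a*y)) \<le> 1" using False by simp
  then show ?thesis using k_nonneg[of a] by (simp add: mult_left_le_one_le)
qed

lemma int_phi: "0 \<le> y \<Longrightarrow> integrable lborel (\<lambda>a. exp (-(a*y)) * k a)"
  by (rule Bochner_Integration.integrable_bound[OF k_int]) (auto intro!: AE_I2 dest: bound_k[simplified])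

lemma phi0: "phi 0 = integral\<^sup>L lborel k"
  by (simp add: phi_def)

lemma phi_cont: "continuous_on {0..} phi"
proof (rule continuous_on_sequentiallyI)
  fix u :: "nat \<Rightarrow> real" and y
  assume u: "\<forall>n. u n \<in> {0..}" "y \<in> {0..}" "u \<longlonglongrightarrow> y"
  show "(\<lambda>n. phi (u n)) \<longlonglongrightarrow> phi y"
    unfolding phi_def
  proof (rule integral_dominated_convergence[where w=k])
    show "AE x in lborel. (\<lambda>n. exp (-(x * u n)) * k x) \<longlonglongrightarrow> exp (-(x*y)) * k x"
      using u(3) by (intro AE_I2 tendsto_intros)
    show "AE x in lborel. norm (exp (-(x * u n)) * k x) \<le> k x" for n
      using bound_k[of "u n"] u(1) k_nonneg by auto
  qed (auto simp: k_int)
qed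

lemma phi_top: "(phi \<longlongrightarrow> 0) at_top"
proof -
  have 1: "AE x in lborel. ((\<lambda>t. exp (-(x * t)) * k x) \<longlongrightarrow> 0) at_top"
  proof -
    have "AE x in lborel. x \<noteq> 0" by (rule AE_lborel_singleton)
    then show ?thesis
    proof eventually_elim
      case (elim x)
      show ?case
      proof (cases "x < 0")
        case True then show ?thesis by (simp add: k_neg)
      next
        case False
        with elim have "x > 0" by simp
        then have "((\<lambda>t. exp (-(x * t))) \<longlongrightarrow> 0) at_top" using filterlim_compose[OF exp_at_bot filterlim_uminus_at_top[THEN iffD1, OF lin_top[of x]]] by simp
        then show ?thesis using tendsto_mult_left_zero by fastforce
      qed
    qed
  qed
  have 2: "\<forall>\<^sub>F i in at_top. AE x in lborel. norm (exp (-(x * i)) * k x) \<le> k x"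
    using eventually_ge_at_top[of "0::real"]
    by eventually_elim (use bound_k k_nonneg in auto)
  have "((\<lambda>t. integral\<^sup>L lborel (\<lambda>a. exp (-(a*t)) * k a)) \<longlongrightarrow> integral\<^sup>L lborel (\<lambda>_. 0::real)) at_top"
    using integral_dominated_convergence_at_top[of "\<lambda>_. 0" lborel "\<lambda>t a. exp (-(a*t)) * k a" k]
      1 2 k_int by simp
  then show ?thesis unfolding phi_def[abs_def] by simp
qed

lemma phi_pt_mono: "0 \<le> y \<Longrightarrow> y \<le> z \<Longrightarrow> exp (-(a*z)) * k a \<le> exp (-(a*y)) * k a"
proof (cases "a < 0")
  case True then show ?thesis by (simp add: k_neg)
next
  case False
  assume "0 \<le> y" "y \<le> z"
  then have "-(a*z) \<le> -(a*y)" using False by (simp add: mult_left_mono)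
  then show ?thesis using k_nonneg[of a] by (intro mult_right_mono) auto
qed

lemma phi_strict: assumes "0 \<le> y" "y < z" shows "phi z < phi y"
proof -
  have iy: "integrable lborel (\<lambda>a. exp (-(a*y)) * k a)" using assms int_phi by auto
  have iz: "integrable lborel (\<lambda>a. exp (-(a*z)) * k a)" using assms int_phi by auto
  have le: "phi z \<le> phi y" unfolding phi_def
    by (rule integral_mono[OF iz iy]) (use assms phi_pt_mono in auto)
  have ne: "phi z \<noteq> phi y"
  proof
    assume eq: "phi z = phi y"
    let ?d = "\<lambda>a. exp (-(a*y)) * k a - exp (-(a*z)) * k a"
    have id: "integrable lborel ?d" using iy iz by auto
    have "integral\<^sup>L lborel ?d = 0" using eq iy iz unfolding phi_def by simp
    then have "AE a in lborel. ?d a = 0"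
      using integral_nonneg_eq_0_iff_AE[OF id] assms phi_pt_mono by auto
    moreover have "AE a in lborel. a \<noteq> 0" by (rule AE_lborel_singleton)
    ultimately have "AE a in lborel. k a = 0"
    proof eventually_elim
      case (elim a)
      show ?case
      proof (cases "a < 0")
        case True then show ?thesis by (simp add: k_neg)
      next
        case False
        with elim have "a > 0" by simp
        then have "exp (-(a*z)) < exp (-(a*y))" using assms by simp
        then show ?thesis using elim(1)
          by (metis eq_iff_diff_eq_0 left_diff_distrib mult_eq_0_iff order_less_irrefl)
      qed
    qed
    then have "integral\<^sup>L lborel k = integral\<^sup>L lborel (\<lambda>_. 0::real)"
      using integral_cong_AE[of k lborel "\<lambda>_. 0"] by auto
    then show False using k_pos by simp
  qed
  show ?thesis using le ne by simp
qed

lemma k_scale: assumes "0 < y"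
  shows "integrable lborel (\<lambda>u. k (u/y))" "integral\<^sup>L lborel (\<lambda>u. k (u/y)) = y * integral\<^sup>L lborel k"
proof -
  show "integrable lborel (\<lambda>u. k (u/y))"
    using lborel_integrable_real_affine[OF k_int, of "1/y" 0] assms by simp
  have "integral\<^sup>L lborel (\<lambda>u. k (u/y)) = \<bar>y\<bar> *\<^sub>R integral\<^sup>L lborel (\<lambda>x. k ((0 + y*x)/y))"
    using assms by (intro lborel_integral_real_affine) simp
  then show "integral\<^sup>L lborel (\<lambda>u. k (u/y)) = y * integral\<^sup>L lborel k"
    using assms by simp
qed

lemma psi_eq: assumes "0 < y"
  shows "integrable lborel (\<lambda>u. exp (-u) * k (u/y))" "y * phi y = integral\<^sup>L lborel (\<lambda>u. exp (-u) * k (u/y))"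
proof -
  have e: "(\<lambda>x. exp (-((0 + 1/y*x)*y)) * k (0 + 1/y*x)) = (\<lambda>u. exp (-u) * k (u/y))"
    using assms by (auto simp: field_simps)
  show "integrable lborel (\<lambda>u. exp (-u) * k (u/y))"
    using lborel_integrable_real_affine[OF int_phi[of y], of "1/y" 0] assms e by simp
  have "phi y = \<bar>1/y\<bar> *\<^sub>R integral\<^sup>L lborel (\<lambda>x. exp (-((0 + 1/y*x)*y)) * k (0 + 1/y*x))"
    unfolding phi_def using assms by (intro lborel_integral_real_affine) simp
  then show "y * phi y = integral\<^sup>L lborel (\<lambda>u. exp (-u) * k (u/y))"
    using assms e by simp
qed

lemma psi_strict: assumes "0 < y" "y < z" shows "y * phi y < z * phi z"
proof -
  have zp: "0 < z" using assms by simp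
  note iy = psi_eq(1)[OF assms(1)] and iz = psi_eq(1)[OF zp]
  have pt: "exp (-u) * k (u/y) \<le> exp (-u) * k (u/z)" for u
  proof (cases "u < 0")
    case True
    then have "u/y < 0" "u/z < 0" using assms zp by (auto simp: divide_neg_pos)
    then show ?thesis by (simp add: k_neg)
  next
    case False
    show ?thesis
    proof (cases "u = 0")
      case True then show ?thesis by simp
    next
      case False
      with \<open>\<not> u < 0\<close> have "u > 0" by simp
      then have "k (u/y) \<le> k (u/z)"
        using assms zp by (intro k_anti) (auto simp: divide_left_mono)
      then show ?thesis by simp
    qed
  qed
  have le: "y * phi y \<le> z * phi z" unfolding psi_eq(2)[OF assms(1)] psi_eq(2)[OF zp]
    by (rule integral_mono[OF iy iz]) (use pt in auto)
  have ne: "y * phi y \<noteq> z * phi z"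
  proof
    assume eq: "y * phi y = z * phi z"
    let ?d = "\<lambda>u. exp (-u) * k (u/z) - exp (-u) * k (u/y)"
    have id: "integrable lborel ?d" using iy iz by auto
    have "integral\<^sup>L lborel ?d = 0" using eq iy iz psi_eq(2)[OF assms(1)] psi_eq(2)[OF zp] by simp
    then have "AE u in lborel. ?d u = 0"
      using integral_nonneg_eq_0_iff_AE[OF id] pt by auto
    then have "AE u in lborel. k (u/z) = k (u/y)"
      by eventually_elim (simp add: right_diff_distrib[symmetric])
    then have "integral\<^sup>L lborel (\<lambda>u. k (u/z)) = integral\<^sup>L lborel (\<lambda>u. k (u/y))"
      by (intro integral_cong_AE) auto
    then have "z * integral\<^sup>L lborel k = y * integral\<^sup>L lborel k"
      using k_scale(2)[OF assms(1)] k_scale(2)[OF zp] by simp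
    then show False using k_pos assms by simp
  qed
  show ?thesis using le ne by simp
qed

lemma phi_nonneg: "0 \<le> phi y"
  unfolding phi_def by (intro Bochner_Integration.integral_nonneg mult_nonneg_nonneg) (auto simp: k_nonneg)

definition G :: "real \<Rightarrow> real \<Rightarrow> real \<Rightarrow> real" where
  "G \<theta> p x = (p*\<theta>*phi(\<theta>*x) + (1+p)*(1-\<theta>)*phi((1+p)*x))/(1+p-\<theta>)"

lemma G_one: "0 < p \<Longrightarrow> G 1 p x = phi x"
  by (simp add: G_def)

lemma G_cont: assumes "0 < \<theta>" "\<theta> \<le> 1" "0 < p" shows "continuous_on {0..} (G \<theta> p)"
proof -
  have 1: "continuous_on {0..} (\<lambda>x. phi (\<theta>*x))"
    by (rule continuous_on_compose2[OF phi_cont]) (use assms in \<open>auto intro!: continuous_intros\<close>)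
  have 2: "continuous_on {0..} (\<lambda>x. phi ((1+p)*x))"
    by (rule continuous_on_compose2[OF phi_cont]) (use assms in \<open>auto intro!: continuous_intros\<close>)
  show ?thesis unfolding G_def[abs_def]
    by (intro continuous_intros 1 2) (use assms in auto)
qed

lemma G_strict: assumes "0 < \<theta>" "\<theta> \<le> 1" "0 < p" "0 \<le> x" "x < y"
  shows "G \<theta> p y < G \<theta> p x"
proof -
  have a: "phi (\<theta>*y) < phi (\<theta>*x)" using assms by (intro phi_strict) auto
  have b: "phi ((1+p)*y) < phi ((1+p)*x)" using assms by (intro phi_strict) auto
  have "p*\<theta>*phi(\<theta>*y) < p*\<theta>*phi(\<theta>*x)" using a assms by simp
  moreover have "(1+p)*(1-\<theta>)*phi((1+p)*y) \<le> (1+p)*(1-\<theta>)*phi((1+p)*x)"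
    using b assms by (intro mult_left_mono) auto
  ultimately have "p*\<theta>*phi(\<theta>*y) + (1+p)*(1-\<theta>)*phi((1+p)*y) < p*\<theta>*phi(\<theta>*x) + (1+p)*(1-\<theta>)*phi((1+p)*x)"
    by (rule add_less_le_mono)
  then show ?thesis unfolding G_def using assms
    by (intro divide_strict_right_mono) auto
qed

lemma G0: assumes "0 < \<theta>" "\<theta> \<le> 1" "0 < p" shows "G \<theta> p 0 = phi 0"
proof -
  have "p*\<theta> + (1+p)*(1-\<theta>) = 1+p-\<theta>" by algebra
  moreover have "1+p-\<theta> \<noteq> 0" using assms by simp
  ultimately show ?thesis unfolding G_def
    by (metis distrib_right mult_zero_right nonzero_mult_div_cancel_left)
qed


lemma G_top: assumes "0 < \<theta>" "\<theta> \<le> 1" "0 < p" shows "(G \<theta> p \<longlongrightarrow> 0) at_top"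
proof -
  have 1: "((\<lambda>x. phi (\<theta>*x)) \<longlongrightarrow> 0) at_top"
    by (rule filterlim_compose[OF phi_top lin_top]) (use assms in auto)
  have 2: "((\<lambda>x. phi ((1+p)*x)) \<longlongrightarrow> 0) at_top"
    by (rule filterlim_compose[OF phi_top lin_top]) (use assms in auto)
  have "((\<lambda>x. (p*\<theta>*phi(\<theta>*x) + (1+p)*(1-\<theta>)*phi((1+p)*x))/(1+p-\<theta>)) \<longlongrightarrow>
     (p*\<theta>*0 + (1+p)*(1-\<theta>)*0)/(1+p-\<theta>)) at_top"
    by (intro tendsto_intros 1 2) (use assms in auto)
  then show ?thesis unfolding G_def[abs_def] by simp
qed

lemma G_root: assumes R: "phi 0 > 1" and "0 < \<theta>" "\<theta> \<le> 1" "0 < p"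
  shows "\<exists>!x. x > 0 \<and> 1 = G \<theta> p x"
proof -
  have "\<forall>\<^sub>F x in at_top. G \<theta> p x < 1"
    using order_tendstoD(2)[OF G_top[OF assms(2,3,4)], of 1] by simp
  moreover have "\<forall>\<^sub>F x in at_top. (0::real) \<le> x" by (rule eventually_ge_at_top)
  ultimately have "\<forall>\<^sub>F x in at_top. G \<theta> p x < 1 \<and> 0 \<le> x" by eventually_elim auto
  then obtain N where "\<And>x. x \<ge> N \<Longrightarrow> G \<theta> p x < 1 \<and> 0 \<le> x"
    unfolding eventually_at_top_linorder by auto
  then obtain X where X: "G \<theta> p X < 1" "0 \<le> X" by blast
  have "continuous_on {0..X} (G \<theta> p)"
    using G_cont[OF assms(2,3,4)] by (rule continuous_on_subset) auto
  then obtain x where x: "0 \<le> x" "x \<le> X" "G \<theta> p x = 1"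
    using IVT2'[of "G \<theta> p" X 1 0] X R G0[OF assms(2-4)] by auto
  have "x \<noteq> 0" using x R G0[OF assms(2-4)] by auto
  then have ex: "x > 0 \<and> 1 = G \<theta> p x" using x by auto
  show ?thesis
  proof (rule ex1I[of _ x])
    show "x > 0 \<and> 1 = G \<theta> p x" by (rule ex)
    fix z assume z: "z > 0 \<and> 1 = G \<theta> p z"
    show "z = x"
    proof (rule ccontr)
      assume "z \<noteq> x"
      then have "z < x \<or> x < z" by auto
      then show False
        using G_strict[OF assms(2-4), of z x] G_strict[OF assms(2-4), of x z] z ex by auto
    qed
  qed
qed

lemma lim_root:
  assumes R: "phi 0 > 1" and th: "0 < \<theta>" "\<theta> \<le> 1"
    and xp: "\<And>p. p > 0 \<Longrightarrow> x p > 0 \<and> 1 = G \<theta> p (x p)"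
    and lim: "(x \<longlongrightarrow> L) at_top"
  shows "(L = 0 \<and> \<theta> * phi 0 \<le> 1) \<or> (L > 0 \<and> \<theta> * phi (\<theta>*L) = 1)"
proof -
  have ev: "\<forall>\<^sub>F p in at_top. (0::real) < p" by (rule eventually_gt_at_top)
  have L0: "L \<ge> 0"
  proof (rule tendsto_lowerbound[OF lim])
    show "\<forall>\<^sub>F p in at_top. 0 \<le> x p"
    proof (rule eventually_mono[OF ev])
      fix p :: real assume "0 < p" then show "0 \<le> x p" using xp[of p] by simp
    qed
  qed simp
  define c1 where "c1 p = p*\<theta>/(1+p-\<theta>)" for p
  define c2 where "c2 p = (1+p)*(1-\<theta>)/(1+p-\<theta>)" for p
  have Gx: "G \<theta> p y = c1 p * phi(\<theta>*y) + c2 p * phi((1+p)*y)" for p y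
    unfolding G_def c1_def c2_def by (simp add: add_divide_distrib)
  have c1: "(c1 \<longlongrightarrow> \<theta>) at_top" unfolding c1_def[abs_def] using c1_lim[OF th] .
  have c2: "(c2 \<longlongrightarrow> 1-\<theta>) at_top" unfolding c2_def[abs_def] using c2_lim[OF th] .
  have evx: "\<forall>\<^sub>F p in at_top. \<theta> * x p \<in> {0..}"
  proof (rule eventually_mono[OF ev])
    fix p :: real assume "0 < p" then show "\<theta> * x p \<in> {0..}" using xp[of p] th by simp
  qed
  have ph1: "((\<lambda>p. phi (\<theta> * x p)) \<longlongrightarrow> phi (\<theta>*L)) at_top"
    by (rule continuous_on_tendsto_compose[OF phi_cont tendsto_mult_left[OF lim] _ evx])
       (use th L0 in simp)
  have G1: "\<forall>\<^sub>F p in at_top. G \<theta> p (x p) = 1"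
  proof (rule eventually_mono[OF ev])
    fix p :: real assume "0 < p" then show "G \<theta> p (x p) = 1" using xp[of p] by simp
  qed
  show ?thesis
  proof (cases "L = 0")
    case True
    have "\<theta> * phi (\<theta>*L) \<le> 1"
    proof (rule tendsto_le[of at_top "\<lambda>_. 1" 1 "\<lambda>p. c1 p * phi (\<theta> * x p)"])
      show "((\<lambda>p. c1 p * phi (\<theta> * x p)) \<longlongrightarrow> \<theta> * phi (\<theta>*L)) at_top"
        by (intro tendsto_mult c1 ph1)
      have c2nn: "c2 p \<ge> 0" if "p > 0" for p
        using th that unfolding c2_def by (intro divide_nonneg_pos mult_nonneg_nonneg) auto
      have "\<forall>\<^sub>F p in at_top. c2 p \<ge> 0"
        using eventually_mono[OF ev c2nn] .
      then show "\<forall>\<^sub>F p in at_top. c1 p * phi (\<theta> * x p) \<le> 1"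
        using G1
      proof eventually_elim
        case (elim p)
        have "0 \<le> c2 p * phi((1+p)*x p)" using elim by (simp add: phi_nonneg)
        then show ?case using elim(2) Gx[of p "x p"] by linarith
      qed
    qed auto
    then show ?thesis using True by simp
  next
    case False
    then have Lp: "L > 0" using L0 by simp
    have "filterlim (\<lambda>p::real. 1 + p) at_top at_top"
      by (rule filterlim_tendsto_add_at_top[OF tendsto_const filterlim_ident])
    then have "filterlim (\<lambda>p. x p * (1 + p)) at_top at_top"
      by (rule filterlim_tendsto_pos_mult_at_top[OF lim Lp])
    then have "filterlim (\<lambda>p. (1 + p) * x p) at_top at_top" by (simp add: mult.commute)
    then have ph2: "((\<lambda>p. phi ((1+p) * x p)) \<longlongrightarrow> 0) at_top"
      by (rule filterlim_compose[OF phi_top])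
    have "((\<lambda>p. c1 p * phi (\<theta> * x p) + c2 p * phi ((1+p) * x p)) \<longlongrightarrow> \<theta> * phi (\<theta>*L) + (1-\<theta>) * 0) at_top"
      by (intro tendsto_intros c1 ph1 c2 ph2)
    then have "((\<lambda>p. G \<theta> p (x p)) \<longlongrightarrow> \<theta> * phi (\<theta>*L)) at_top" unfolding Gx by simp
    moreover have "((\<lambda>p. G \<theta> p (x p)) \<longlongrightarrow> 1) at_top"
      using G1 by (simp add: tendsto_eventually)
    ultimately have "\<theta> * phi (\<theta>*L) = 1" by (rule tendsto_unique[rotated]) simp
    then show ?thesis using Lp by simp
  qed
qed

end


lemma kk_exists:
  fixes B :: real and Fs A Finf :: "real \<Rightarrow> real"
  assumes B_pos: "B > 0"
    and Fs_range: "\<And>a. a \<ge> 0 \<Longrightarrow> 0 \<le> Fs a \<and> Fs a \<le> 1"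
    and Fs_noninc: "\<And>a b. 0 \<le> a \<Longrightarrow> a \<le> b \<Longrightarrow> Fs b \<le> Fs a"
    and Fs_0: "Fs 0 = 1"
    and A_nonneg: "\<And>\<tau>. \<tau> \<ge> 0 \<Longrightarrow> A \<tau> \<ge> 0"
    and A_meas: "A \<in> borel_measurable borel"
    and R_finite: "(\<integral>\<^sup>+ a\<in>{0..}. (\<integral>\<^sup>+ \<tau>\<in>{0..}. ennreal (Fs (a + \<tau>) * A \<tau>) \<partial>lborel) \<partial>lborel) < \<infinity>"
    and R_gt1: "f0 B Fs A > 1"
  shows "\<exists>kk. kfun kk \<and> (\<forall>w. B * dbl Fs A w = integral\<^sup>L lborel (\<lambda>a. w a * kk a))"
proof -
  define Fs' where "Fs' t = (if 0 \<le> t then Fs t else 1)" for t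
  have "mono (\<lambda>t. - Fs' t)"
  proof (rule monoI)
    fix x y :: real assume "x \<le> y"
    then show "- Fs' x \<le> - Fs' y"
      using Fs_noninc[of x y] Fs_range[of y] unfolding Fs'_def by auto
  qed
  then have "(\<lambda>t. - Fs' t) \<in> borel_measurable borel" by (rule borel_measurable_mono)
  then have Fs'_meas[measurable]: "Fs' \<in> borel_measurable borel" by simp
  note A_meas[measurable]
  define h where "h a \<tau> = indicator {0..} \<tau> * (Fs' (a + \<tau>) * A \<tau>)" for a \<tau> :: real
  have h_meas[measurable]: "case_prod h \<in> borel_measurable (lborel \<Otimes>\<^sub>M lborel)"
    unfolding h_def by measurable
  have ha_meas[measurable]: "h a \<in> borel_measurable lborel" for a
    unfolding h_def by measurable
  have h_nonneg: "0 \<le> h a \<tau>" for a \<tau>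
    unfolding h_def Fs'_def using Fs_range[of "a+\<tau>"] A_nonneg[of \<tau>] by (auto simp: indicator_def)
  define K where "K a = integral\<^sup>L lborel (h a)" for a
  have K_meas: "K \<in> borel_measurable lborel"
    unfolding K_def using lborel.borel_measurable_lebesgue_integral[OF h_meas] by simp
  then have K_meas'[measurable]: "K \<in> borel_measurable borel" by simp
  define kk where "kk a = B * (indicator {0..} a * K a)" for a
  have dbl_eq: "B * dbl Fs A w = integral\<^sup>L lborel (\<lambda>a. w a * kk a)" for w
  proof -
    have "dbl Fs A w = integral\<^sup>L lborel (\<lambda>a. w a * (indicator {0..} a * K a))"
      unfolding dbl_def set_lebesgue_integral_def
    proof (rule Bochner_Integration.integral_cong[OF refl])
      fix a :: real
      show "indicator {0..} a *\<^sub>R (integral\<^sup>L lborel (\<lambda>\<tau>. indicator {0..} \<tau> *\<^sub>R (w a * Fs (a + \<tau>) * A \<tau>)))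
          = w a * (indicator {0..} a * K a)"
      proof (cases "a \<ge> 0")
        case True
        have "(\<lambda>\<tau>. indicator {0..} \<tau> *\<^sub>R (w a * Fs (a + \<tau>) * A \<tau>)) = (\<lambda>\<tau>. w a * h a \<tau>)"
          using True by (auto simp: h_def Fs'_def indicator_def fun_eq_iff)
        then show ?thesis using True by (simp add: K_def)
      next
        case False then show ?thesis by simp
      qed
    qed
    then have "B * dbl Fs A w = integral\<^sup>L lborel (\<lambda>a. B * (w a * (indicator {0..} a * K a)))"
      by simp
    also have "\<dots> = integral\<^sup>L lborel (\<lambda>a. w a * kk a)"
      unfolding kk_def by (simp add: mult.left_commute)
    finally show ?thesis .
  qed
  define N where "N a = (\<integral>\<^sup>+\<tau>. ennreal (h a \<tau>) \<partial>lborel)" for a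
  have RN: "(\<integral>\<^sup>+ a. N a * indicator {0..} a \<partial>lborel) < \<infinity>"
  proof -
    have "(\<integral>\<^sup>+ a. N a * indicator {0..} a \<partial>lborel) =
      (\<integral>\<^sup>+ a\<in>{0..}. (\<integral>\<^sup>+ \<tau>\<in>{0..}. ennreal (Fs (a + \<tau>) * A \<tau>) \<partial>lborel) \<partial>lborel)"
    proof (rule nn_integral_cong)
      fix a :: real
      show "N a * indicator {0..} a = (\<integral>\<^sup>+ \<tau>\<in>{0..}. ennreal (Fs (a + \<tau>) * A \<tau>) \<partial>lborel) * indicator {0..} a"
      proof (cases "a \<ge> 0")
        case True
        have "N a = (\<integral>\<^sup>+ \<tau>\<in>{0..}. ennreal (Fs (a + \<tau>) * A \<tau>) \<partial>lborel)"
          unfolding N_def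
          by (rule nn_integral_cong) (use True in \<open>auto simp: h_def Fs'_def indicator_def\<close>)
        then show ?thesis by simp
      qed simp
    qed
    then show ?thesis using R_finite by simp
  qed
  have N_anti: "N b \<le> N a" if "0 \<le> a" "a \<le> b" for a b
    unfolding N_def
  proof (rule nn_integral_mono)
    fix \<tau> :: real
    have "h b \<tau> \<le> h a \<tau>"
    proof (cases "\<tau> \<ge> 0")
      case True
      then have "Fs (b+\<tau>) \<le> Fs (a+\<tau>)" using that by (intro Fs_noninc) auto
      then show ?thesis unfolding h_def Fs'_def using True that A_nonneg[of \<tau>]
        by (auto intro: mult_right_mono)
    qed (simp add: h_def)
    then show "ennreal (h b \<tau>) \<le> ennreal (h a \<tau>)" by (rule ennreal_leI)
  qed
  have N_fin: "N a < \<infinity>" if "0 < a" for a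
  proof (rule ccontr)
    assume "\<not> N a < \<infinity>"
    then have Na: "N a = \<infinity>" by (simp add: less_top[symmetric])
    have "(\<integral>\<^sup>+ a'. \<infinity> * indicator {0<..a} a' \<partial>lborel) \<le> (\<integral>\<^sup>+ a'. N a' * indicator {0..} a' \<partial>lborel)"
    proof (rule nn_integral_mono)
      fix a' :: real
      show "\<infinity> * indicator {0<..a} a' \<le> N a' * indicator {0..} a'"
      proof (cases "a' \<in> {0<..a}")
        case True
        then have "N a \<le> N a'" using N_anti[of a' a] by auto
        then show ?thesis using True Na by (simp add: indicator_def)
      qed simp
    qed
    also have "\<dots> < \<infinity>" by (rule RN)
    finally have "\<infinity> * emeasure lborel {0<..a} < \<infinity>"
      by (subst (asm) nn_integral_cmult_indicator) auto
    then show False using that by (simp add: ennreal_mult_top)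
  qed
  have h_int: "integrable lborel (h a)" if "0 < a" for a
    by (rule integrableI_nonneg) (use h_nonneg N_fin[OF that] in \<open>auto simp: N_def\<close>)
  have K_nonneg: "0 \<le> K a" for a
    unfolding K_def by (intro Bochner_Integration.integral_nonneg h_nonneg)
  have K_anti: "K b \<le> K a" if "0 < a" "a \<le> b" for a b
    unfolding K_def
  proof (rule integral_mono[OF h_int h_int])
    fix \<tau> :: real
    show "h b \<tau> \<le> h a \<tau>"
    proof (cases "\<tau> \<ge> 0")
      case True
      then have "Fs (b+\<tau>) \<le> Fs (a+\<tau>)" using that by (intro Fs_noninc) auto
      then show ?thesis unfolding h_def Fs'_def using True that A_nonneg[of \<tau>]
        by (auto intro: mult_right_mono)
    qed (simp add: h_def)
  qed (use that in auto)
  have KN: "ennreal (K a) \<le> N a" for a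
  proof -
    have "K a = enn2real (N a)" unfolding K_def N_def
      by (rule integral_eq_nn_integral) (auto simp: h_nonneg)
    then show ?thesis by (simp add: ennreal_enn2real_if)
  qed
  have iK: "integrable lborel (\<lambda>a. indicator {0..} a * K a)"
  proof (rule integrableI_nonneg)
    show "AE x in lborel. 0 \<le> indicator {0..} x * K x" using K_nonneg by auto
    have "(\<integral>\<^sup>+ a. ennreal (indicator {0..} a * K a) \<partial>lborel) \<le> (\<integral>\<^sup>+ a. N a * indicator {0..} a \<partial>lborel)"
      by (rule nn_integral_mono) (use KN in \<open>auto simp: indicator_def\<close>)
    then show "(\<integral>\<^sup>+ a. ennreal (indicator {0..} a * K a) \<partial>lborel) < \<infinity>" using RN by simp
  qed simp
  have "kfun kk"
  proof
    show "kk \<in> borel_measurable borel" unfolding kk_def by measurable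
    show "0 \<le> kk a" for a unfolding kk_def using B_pos K_nonneg by auto
    show "kk a = 0" if "a < 0" for a unfolding kk_def using that by simp
    show "integrable lborel kk" unfolding kk_def using iK by simp
    have "integral\<^sup>L lborel kk = f0 B Fs A" unfolding f0_def dbl_eq by simp
    then show "integral\<^sup>L lborel kk > 0" using R_gt1 by simp
    show "kk b \<le> kk a" if "0 < a" "a \<le> b" for a b
      unfolding kk_def using that K_anti[OF that] B_pos by simp
  qed
  then show ?thesis using dbl_eq by blast
qed

theorem mainTheorem2:
  fixes B :: real and Fs A Finf :: "real \<Rightarrow> real"
  assumes B_pos: "B > 0"
    and Fs_range: "\<And>a. a \<ge> 0 \<Longrightarrow> 0 \<le> Fs a \<and> Fs a \<le> 1"
    and Fs_noninc: "\<And>a b. 0 \<le> a \<Longrightarrow> a \<le> b \<Longrightarrow> Fs b \<le> Fs a"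
    and Fs_0: "Fs 0 = 1"
    and A_nonneg: "\<And>\<tau>. \<tau> \<ge> 0 \<Longrightarrow> A \<tau> \<ge> 0"
    and A_meas: "A \<in> borel_measurable borel"
    and R_finite: "(\<integral>\<^sup>+ a\<in>{0..}. (\<integral>\<^sup>+ \<tau>\<in>{0..}. ennreal (Fs (a + \<tau>) * A \<tau>) \<partial>lborel) \<partial>lborel) < \<infinity>"
    and R_gt1: "f0 B Fs A > 1"
    and lim: "\<And>\<theta>. 0 < \<theta> \<Longrightarrow> \<theta> \<le> 1 \<Longrightarrow> ((\<lambda>p. Fvac B Fs A \<theta> p) \<longlongrightarrow> Finf \<theta>) at_top"
  shows "(\<forall>\<theta>. 0 < \<theta> \<and> \<theta> \<le> 1 / f0 B Fs A \<longrightarrow> Finf \<theta> = 0)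
       \<and> (\<forall>\<theta>. 1 / f0 B Fs A < \<theta> \<and> \<theta> < 1 \<longrightarrow> Finf \<theta> \<noteq> 0)
       \<and> Finf 1 = Fstar B Fs A
       \<and> strict_mono_on {1 / f0 B Fs A <..< 1} Finf
       \<and> (\<forall>\<theta>. 1 / f0 B Fs A < \<theta> \<and> \<theta> < 1 \<longrightarrow> 0 < Finf \<theta> \<and> Finf \<theta> < Fstar B Fs A)"
proof -
  obtain kk where kf: "kfun kk" and dbl_eq: "\<And>w. B * dbl Fs A w = integral\<^sup>L lborel (\<lambda>a. w a * kk a)"
    using kk_exists[OF B_pos Fs_range Fs_noninc Fs_0 A_nonneg A_meas R_finite R_gt1] by blast
  interpret kfun kk by (rule kf)
  have R: "phi 0 = f0 B Fs A" unfolding phi_def f0_def dbl_eq by simp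
  have R1: "phi 0 > 1" using R R_gt1 by simp
  have Geq: "B / (1+p-\<theta>) * dbl Fs A (\<lambda>a. p * \<theta> * exp (- \<theta> * a * x)
              + (1 + p) * (1 - \<theta>) * exp (- (1 + p) * a * x)) = G \<theta> p x"
    if "0 < \<theta>" "\<theta> \<le> 1" "0 < p" "0 \<le> x" for \<theta> p x
  proof -
    have i1: "integrable lborel (\<lambda>a. exp (-(a*(\<theta>*x))) * kk a)" using that by (intro int_phi) simp
    have i2: "integrable lborel (\<lambda>a. exp (-(a*((1+p)*x))) * kk a)" using that by (intro int_phi) simp
    have "B * dbl Fs A (\<lambda>a. p * \<theta> * exp (- \<theta> * a * x) + (1 + p) * (1 - \<theta>) * exp (- (1 + p) * a * x))
       = integral\<^sup>L lborel (\<lambda>a. (p*\<theta>) * (exp (-(a*(\<theta>*x))) * kk a) + ((1+p)*(1-\<theta>)) * (exp (-(a*((1+p)*x))) * kk a))"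
      unfolding dbl_eq by (rule Bochner_Integration.integral_cong) (auto simp: algebra_simps)
    also have "\<dots> = p*\<theta>*phi(\<theta>*x) + (1+p)*(1-\<theta>)*phi((1+p)*x)"
      using i1 i2 unfolding phi_def by simp
    finally have "B * dbl Fs A (\<lambda>a. p * \<theta> * exp (- \<theta> * a * x) + (1 + p) * (1 - \<theta>) * exp (- (1 + p) * a * x))
       = p*\<theta>*phi(\<theta>*x) + (1+p)*(1-\<theta>)*phi((1+p)*x)" .
    moreover have "B / (1+p-\<theta>) * dbl Fs A (\<lambda>a. p * \<theta> * exp (- \<theta> * a * x) + (1 + p) * (1 - \<theta>) * exp (- (1 + p) * a * x))
       = (B * dbl Fs A (\<lambda>a. p * \<theta> * exp (- \<theta> * a * x) + (1 + p) * (1 - \<theta>) * exp (- (1 + p) * a * x))) / (1+p-\<theta>)"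
      by simp
    ultimately show ?thesis unfolding G_def by simp
  qed
  have Fv: "Fvac B Fs A \<theta> p = (THE x. x > 0 \<and> 1 = G \<theta> p x)" if "0 < \<theta>" "\<theta> \<le> 1" "0 < p" for \<theta> p
  proof -
    have "(\<lambda>x. x > 0 \<and> 1 = B / (1 + p - \<theta>) * dbl Fs A (\<lambda>a. p * \<theta> * exp (- \<theta> * a * x)
              + (1 + p) * (1 - \<theta>) * exp (- (1 + p) * a * x))) = (\<lambda>x. x > 0 \<and> 1 = G \<theta> p x)"
    proof (rule ext)
      fix x :: real
      show "(x > 0 \<and> 1 = B / (1 + p - \<theta>) * dbl Fs A (\<lambda>a. p * \<theta> * exp (- \<theta> * a * x)
              + (1 + p) * (1 - \<theta>) * exp (- (1 + p) * a * x))) = (x > 0 \<and> 1 = G \<theta> p x)"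
      proof (cases "x > 0")
        case True
        show ?thesis using Geq[OF that less_imp_le[OF True]] by (simp only:)
      qed simp
    qed
    then show ?thesis unfolding Fvac_def by simp
  qed
  have Fst: "Fstar B Fs A = (THE x. x > 0 \<and> 1 = phi x)"
  proof -
    have "B * dbl Fs A (\<lambda>a. exp (- a * x)) = phi x" for x
      unfolding dbl_eq phi_def by simp
    then show ?thesis unfolding Fstar_def by simp
  qed
  have root: "Fvac B Fs A \<theta> p > 0 \<and> 1 = G \<theta> p (Fvac B Fs A \<theta> p)" if "0 < \<theta>" "\<theta> \<le> 1" "0 < p" for \<theta> p
    unfolding Fv[OF that] by (rule theI'[OF G_root[OF R1 that]])
  define s where "s = Fstar B Fs A"
  have sP: "s > 0 \<and> 1 = phi s"
  proof -
    have "\<exists>!x. x > 0 \<and> 1 = phi x" using G_root[OF R1, of 1 1] by (simp add: G_one)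
    then show ?thesis unfolding s_def Fst by (rule theI')
  qed
  have LR: "(Finf \<theta> = 0 \<and> \<theta> * phi 0 \<le> 1) \<or> (Finf \<theta> > 0 \<and> \<theta> * phi (\<theta> * Finf \<theta>) = 1)"
    if "0 < \<theta>" "\<theta> \<le> 1" for \<theta>
    by (rule lim_root[OF R1 that _ lim[OF that]]) (use root[OF that] in blast)
  have F1: "Finf 1 = s"
  proof -
    have "((\<lambda>p. Fvac B Fs A 1 p) \<longlongrightarrow> s) at_top"
    proof (rule tendsto_eventually)
      show "\<forall>\<^sub>F p in at_top. Fvac B Fs A 1 p = s"
      proof (rule eventually_mono[OF eventually_gt_at_top[of 0]])
        fix p :: real assume "0 < p" then show "Fvac B Fs A 1 p = s"
          by (simp add: Fv G_one Fst s_def)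
      qed
    qed
    then show ?thesis by (intro tendsto_unique[OF _ lim[of 1]]) auto
  qed
  have hi: "Finf \<theta> > 0 \<and> \<theta> * phi (\<theta> * Finf \<theta>) = 1" if "1 / phi 0 < \<theta>" "\<theta> < 1" for \<theta>
  proof -
    have t0: "0 < \<theta>" using that(1) R1 by (smt (verit) divide_pos_pos)
    have "1 < \<theta> * phi 0" using that(1) R1 by (simp add: divide_less_eq mult.commute)
    then show ?thesis using LR[OF t0] that by auto
  qed
  have psi_id: "Finf \<theta> = (\<theta> * Finf \<theta>) * phi (\<theta> * Finf \<theta>)" if "\<theta> * phi (\<theta> * Finf \<theta>) = 1" for \<theta>
  proof -
    have "(\<theta> * Finf \<theta>) * phi (\<theta> * Finf \<theta>) = Finf \<theta> * (\<theta> * phi (\<theta> * Finf \<theta>))" by (simp add: ac_simps)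
    then show ?thesis using that by simp
  qed
  have phi_inv: "y1 < y2" if "0 \<le> y1" "0 \<le> y2" "phi y2 < phi y1" for y1 y2
  proof (rule ccontr)
    assume "\<not> y1 < y2"
    then have "y2 = y1 \<or> y2 < y1" by auto
    then show False using phi_strict[of y2 y1] that by auto
  qed
  have phi_th: "phi (\<theta> * Finf \<theta>) = 1 / \<theta>" if "\<theta> * phi (\<theta> * Finf \<theta>) = 1" "0 < \<theta>" for \<theta>
    using that by (simp add: field_simps)
  have t0: "0 < \<theta>" if "1 / phi 0 < \<theta>" for \<theta>
    using that R1 by (smt (verit) divide_pos_pos)
  have part1: "Finf \<theta> = 0" if "0 < \<theta>" "\<theta> \<le> 1 / phi 0" for \<theta>
  proof -
    have th1: "\<theta> \<le> 1" using that R1 by (smt (verit) divide_le_eq_1_pos)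
    have tp: "\<theta> * phi 0 \<le> 1" using that R1 by (simp add: le_divide_eq mult.commute)
    show ?thesis
    proof (rule ccontr)
      assume "Finf \<theta> \<noteq> 0"
      then have L: "Finf \<theta> > 0" "\<theta> * phi (\<theta> * Finf \<theta>) = 1" using LR[OF that(1) th1] by auto
      have "phi (\<theta> * Finf \<theta>) < phi 0" using L that by (intro phi_strict) auto
      then have "\<theta> * phi (\<theta> * Finf \<theta>) < \<theta> * phi 0" using that by simp
      then show False using L tp by simp
    qed
  qed
  have s0: "s > 0" using sP by (rule conjunct1)
  have ps: "phi s = 1" using sP[THEN conjunct2] by (rule sym)
  have part5: "0 < Finf \<theta> \<and> Finf \<theta> < s" if "1 / phi 0 < \<theta>" "\<theta> < 1" for \<theta>
  proof -
    note h = hi[OF that] and tp = t0[OF that(1)]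
    let ?y = "\<theta> * Finf \<theta>"
    have yp: "?y > 0" by (rule mult_pos_pos[OF tp h[THEN conjunct1]])
    have py: "phi ?y = 1 / \<theta>" using phi_th[OF h[THEN conjunct2] tp] .
    have "1 < 1 / \<theta>" by (subst less_divide_eq_1_pos[OF tp]) (rule that(2))
    then have "phi s < phi ?y" unfolding py ps .
    then have "?y < s" by (rule phi_inv[OF less_imp_le[OF yp] less_imp_le[OF s0]])
    then have 1: "?y * phi ?y < s * phi s" by (intro psi_strict yp)
    have 2: "?y * phi ?y = Finf \<theta>" using psi_id[OF h[THEN conjunct2]] by (rule sym)
    have 3: "s * phi s = s" unfolding ps by (rule mult_1_right)
    have "Finf \<theta> < s" using 1 unfolding 2 3 .
    then show ?thesis using h[THEN conjunct1] by (intro conjI)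
  qed
  have part4: "strict_mono_on {1 / phi 0 <..< 1} Finf"
  proof (rule strict_mono_onI)
    fix a b assume ab: "a \<in> {1 / phi 0 <..< 1}" "b \<in> {1 / phi 0 <..< 1}" "a < b"
    have a1: "1 / phi 0 < a" "a < 1" using ab(1) by simp_all
    have b1: "1 / phi 0 < b" "b < 1" using ab(2) by simp_all
    note ha = hi[OF a1] and hb = hi[OF b1]
    have ap: "0 < a" by (rule t0[OF a1(1)])
    have bp: "0 < b" by (rule t0[OF b1(1)])
    have ya: "a * Finf a > 0" by (rule mult_pos_pos[OF ap ha[THEN conjunct1]])
    have yb: "b * Finf b > 0" by (rule mult_pos_pos[OF bp hb[THEN conjunct1]])
    have pa: "phi (a * Finf a) = 1 / a" by (rule phi_th[OF ha[THEN conjunct2] ap])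
    have pb: "phi (b * Finf b) = 1 / b" by (rule phi_th[OF hb[THEN conjunct2] bp])
    have "1 / b < 1 / a" by (rule frac_less2[OF zero_less_one order_refl ap ab(3)])
    then have "phi (b * Finf b) < phi (a * Finf a)" unfolding pa pb .
    then have "a * Finf a < b * Finf b" by (rule phi_inv[OF less_imp_le[OF ya] less_imp_le[OF yb]])
    then have 1: "(a * Finf a) * phi (a * Finf a) < (b * Finf b) * phi (b * Finf b)"
      by (intro psi_strict ya)
    have 2: "(a * Finf a) * phi (a * Finf a) = Finf a" using psi_id[OF ha[THEN conjunct2]] by (rule sym)
    have 3: "(b * Finf b) * phi (b * Finf b) = Finf b" using psi_id[OF hb[THEN conjunct2]] by (rule sym)
    show "Finf a < Finf b" using 1 unfolding 2 3 .
  qed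
  have p2: "\<forall>\<theta>. 1 / phi 0 < \<theta> \<and> \<theta> < 1 \<longrightarrow> Finf \<theta> \<noteq> 0"
    using part5 by force
  have p5: "\<forall>\<theta>. 1 / phi 0 < \<theta> \<and> \<theta> < 1 \<longrightarrow> 0 < Finf \<theta> \<and> Finf \<theta> < s"
    using part5 by blast
  have p1: "\<forall>\<theta>. 0 < \<theta> \<and> \<theta> \<le> 1 / phi 0 \<longrightarrow> Finf \<theta> = 0"
    using part1 by blast
  show ?thesis
    unfolding R[symmetric] s_def[symmetric]
    using p1 p2 part4 p5 F1 by (intro conjI)
qed

end
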